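(* Let $X$ be any Banach space and let $Y$ be a Banach space whose unit ball has a strongly exposed point $y_0\in S_Y$. Let $E=X\oplus_1Y$. Then for every $\varepsilon>0$ there is a convex combination of slices of $B_E$ containing $0$ and of diameter at most $4\varepsilon$ (i.e., there are ccs of $B_E$ around $0$ of arbitrarily small diameter). In particular, $E$ contains no ccs Daugavet point and fails the strong diameter 2 property.
   Context: $X\oplus_1Y$ is $X\times Y$ with norm $\|(x,y)\|=\|x\|+\|y\|$. A point $y_0\in B_Y$ is strongly exposed if there is $y_0^*\in S_{Y^*}$ with $\operatorname{Re}y_0^*(y_0)=1$ such that $\|y_n-y_0\|\to0$ whenever $y_n\in B_Y$ and $\operatorname{Re}y_0^*(y_n)\to1$. A slice of $B_E$ is a non-empty set $\{u\in B_E:\operatorname{Re}f(u)>\|f\|-\delta\}$ with $f\in E^*$, $\delta>0$; a ccs of $B_E$ is $\sum_{i=1}^n\lambda_iS_i$ with $\lambda_i\in(0,1]$, $\sum\lambda_i=1$, $S_i$ slices. $u\in S_E$ is a ccs Daugavet point if $\sup_{v\in C}\|u-v\|=2$ for every ccs $C$ of $B_E$. The strong diameter 2 property means every ccs of the unit ball has diameter $2$. *)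

theory Defs
  imports "HOL-Analysis.Analysis"
begin

text \<open>The l1-sum X (+)_1 Y is modelled on the product type with the explicit norm below
  (the library norm on products is the l2 one, so we do not use it).\<close>

definition norm1 :: "('a::real_normed_vector \<times> 'b::real_normed_vector) \<Rightarrow> real" where
  "norm1 u = norm (fst u) + norm (snd u)"

definition ball1 :: "('a::real_normed_vector \<times> 'b::real_normed_vector) set" where
  "ball1 = {u. norm1 u \<le> 1}"

definition dnorm1 :: "('a::real_normed_vector \<times> 'b::real_normed_vector \<Rightarrow> real) \<Rightarrow> real" where
  "dnorm1 f = (SUP u\<in>ball1. \<bar>f u\<bar>)"

definition is_slice1 :: "('a::real_normed_vector \<times> 'b::real_normed_vector) set \<Rightarrow> bool" where
  "is_slice1 S \<longleftrightarrow> (\<exists>f \<delta>. bounded_linear f \<and> \<delta> > 0 \<and>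
       S = {u\<in>ball1. f u > dnorm1 f - \<delta>} \<and> S \<noteq> {})"

definition is_ccs1 :: "('a::real_normed_vector \<times> 'b::real_normed_vector) set \<Rightarrow> bool" where
  "is_ccs1 C \<longleftrightarrow> (\<exists>n::nat. \<exists>lam S. n \<ge> 1 \<and> (\<forall>i<n. 0 < lam i \<and> lam i \<le> 1 \<and> is_slice1 (S i))
       \<and> (\<Sum>i<n. lam i) = 1
       \<and> C = {(\<Sum>i<n. lam i *\<^sub>R v i) | v. \<forall>i<n. v i \<in> S i})"

definition ccs_daugavet_point1 :: "('a::real_normed_vector \<times> 'b::real_normed_vector) \<Rightarrow> bool" where
  "ccs_daugavet_point1 u \<longleftrightarrow> norm1 u = 1 \<and>
     (\<forall>C. is_ccs1 C \<longrightarrow> (SUP v\<in>C. norm1 (u - v)) = 2)"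

definition diam1 :: "('a::real_normed_vector \<times> 'b::real_normed_vector) set \<Rightarrow> real" where
  "diam1 C = (SUP p\<in>C \<times> C. norm1 (fst p - snd p))"

definition SD2P1 :: "('a::real_normed_vector \<times> 'b::real_normed_vector) itself \<Rightarrow> bool" where
  "SD2P1 _ \<longleftrightarrow> (\<forall>C::('a \<times> 'b) set. is_ccs1 C \<longrightarrow> diam1 C = 2)"

definition strongly_exposed :: "'b::real_normed_vector \<Rightarrow> bool" where
  "strongly_exposed y0 \<longleftrightarrow> norm y0 \<le> 1 \<and>
     (\<exists>g::'b \<Rightarrow> real. bounded_linear g \<and> onorm g = 1 \<and> g y0 = 1 \<and>
        (\<forall>y::nat \<Rightarrow> 'b. (\<forall>n. norm (y n) \<le> 1) \<longrightarrow> (\<lambda>n. g (y n)) \<longlonglongrightarrow> 1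
            \<longrightarrow> (\<lambda>n. norm (y n - y0)) \<longlonglongrightarrow> 0))"

end

theory Submission
  imports Defs
begin

lemma dnorm_g:
  fixes g :: "'b::real_normed_vector \<Rightarrow> real"
  assumes bl: "bounded_linear g" and og: "onorm g = 1"
    and gy: "g y0 = 1" and ny: "norm y0 \<le> 1" and s: "s = 1 \<or> s = -1"
  shows "dnorm1 (\<lambda>u::'a::real_normed_vector \<times> 'b. s * g (snd u)) = 1"
proof -
  let ?F = "\<lambda>u::'a \<times> 'b. \<bar>s * g (snd u)\<bar>"
  have "(0::'a, y0) \<in> ball1" using ny by (simp add: ball1_def norm1_def)
  moreover have "?F (0::'a, y0) = 1" using s gy by auto
  ultimately have A: "1 \<in> ?F ` ball1" by force
  have B: "\<forall>x\<in>?F ` ball1. x \<le> 1"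
  proof
    fix x assume "x \<in> ?F ` ball1"
    then obtain u :: "'a \<times> 'b" where u: "u \<in> ball1" "x = ?F u" by blast
    have "norm (fst u) + norm (snd u) \<le> 1" using u(1) by (auto simp: ball1_def norm1_def)
    then have "norm (snd u) \<le> 1" by (smt (verit) norm_ge_zero)
    moreover have "norm (g (snd u)) \<le> onorm g * norm (snd u)" by (rule onorm[OF bl])
    ultimately show "x \<le> 1" using u(2) s og by (auto simp: abs_mult)
  qed
  show ?thesis unfolding dnorm1_def by (rule cSup_eq_maximum[OF A B[rule_format]])
qed

lemma exposed_unif:
  assumes bl: "bounded_linear (g::'b::real_normed_vector \<Rightarrow> real)" and og: "onorm g = 1"
    and se: "\<forall>y::nat \<Rightarrow> 'b. (\<forall>n. norm (y n) \<le> 1) \<longrightarrow> (\<lambda>n. g (y n)) \<longlonglongrightarrow> 1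
            \<longrightarrow> (\<lambda>n. norm (y n - y0)) \<longlonglongrightarrow> 0"
    and e: "e > 0"
  shows "\<exists>d>0. \<forall>y. norm y \<le> 1 \<longrightarrow> g y > 1 - d \<longrightarrow> norm (y - y0) < e"
proof (rule ccontr)
  assume "\<not> ?thesis"
  then have "\<forall>n. \<exists>y. norm y \<le> 1 \<and> g y > 1 - inverse (real (Suc n)) \<and> norm (y - y0) \<ge> e"
    by (metis inverse_positive_iff_positive not_less of_nat_0_less_iff zero_less_Suc)
  then obtain y where y: "\<And>n. norm (y n) \<le> 1" "\<And>n. g (y n) > 1 - inverse (real (Suc n))"
      "\<And>n. norm (y n - y0) \<ge> e" by metis
  have up: "g (y n) \<le> 1" for n
  proof -
    have "norm (g (y n)) \<le> onorm g * norm (y n)" by (rule onorm[OF bl])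
    then show ?thesis using y(1)[of n] og by auto
  qed
  have l1: "(\<lambda>n. 1 - inverse (real (Suc n))) \<longlonglongrightarrow> 1"
    using tendsto_diff[OF tendsto_const LIMSEQ_inverse_real_of_nat, of 1] by simp
  have "(\<lambda>n. g (y n)) \<longlonglongrightarrow> 1"
    by (rule tendsto_sandwich[OF _ _ l1 tendsto_const]) (use y(2) up less_imp_le in \<open>auto intro!: always_eventually\<close>)
  then have "(\<lambda>n. norm (y n - y0)) \<longlonglongrightarrow> 0" using se y(1) by blast
  then have "eventually (\<lambda>n. norm (y n - y0) < e) sequentially" using e by (rule order_tendstoD)
  then obtain n where "norm (y n - y0) < e" by (auto simp: eventually_sequentially)
  with y(3)[of n] show False by simp
qed

lemma half_bound:
  fixes a b :: "'a::real_normed_vector \<times> 'b::real_normed_vector"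
  shows "norm1 ((1/2) *\<^sub>R a + (1/2) *\<^sub>R b) \<le>
    (norm (fst a) + norm (fst b))/2 + (norm (snd a - y0) + norm (snd b + y0))/2"
proof -
  have 1: "norm ((1/2) *\<^sub>R fst a + (1/2) *\<^sub>R fst b) \<le> (norm (fst a) + norm (fst b))/2"
    using norm_triangle_ineq[of "(1/2) *\<^sub>R fst a" "(1/2) *\<^sub>R fst b"] by simp
  have e: "(1/2) *\<^sub>R snd a + (1/2) *\<^sub>R snd b = (1/2::real) *\<^sub>R ((snd a - y0) + (snd b + y0))"
    by (simp add: algebra_simps)
  have 2: "norm ((1/2) *\<^sub>R snd a + (1/2) *\<^sub>R snd b) \<le> (norm (snd a - y0) + norm (snd b + y0))/2"
    unfolding e using norm_triangle_ineq[of "snd a - y0" "snd b + y0"] by simp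
  show ?thesis using 1 2 unfolding norm1_def by (simp add: field_simps)
qed

lemma norm1_diff: "norm1 (u - v) \<le> norm1 u + norm1 v"
  unfolding norm1_def using norm_triangle_ineq4[of "fst u" "fst v"] norm_triangle_ineq4[of "snd u" "snd v"]
  by simp

lemma g_le_norm:
  assumes "bounded_linear (g::'b::real_normed_vector \<Rightarrow> real)" "onorm g = 1"
  shows "\<bar>g y\<bar> \<le> norm y"
  using onorm[OF assms(1), of y] assms(2) by simp

theorem mainTheorem8:
  fixes y0 :: "'b::banach"
  assumes "norm y0 = 1" and "strongly_exposed y0"
  shows "(\<forall>\<epsilon>>0. \<exists>C::('a::banach \<times> 'b) set. is_ccs1 C \<and> 0 \<in> C \<and>
            (\<forall>u\<in>C. \<forall>v\<in>C. norm1 (u - v) \<le> 4 * \<epsilon>))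
         \<and> (\<forall>u::'a \<times> 'b. \<not> ccs_daugavet_point1 u)
         \<and> \<not> SD2P1 TYPE('a \<times> 'b)"
proof -
  obtain g :: "'b \<Rightarrow> real" where bl: "bounded_linear g" and og: "onorm g = 1" and gy: "g y0 = 1"
    and se: "\<forall>y::nat \<Rightarrow> 'b. (\<forall>n. norm (y n) \<le> 1) \<longrightarrow> (\<lambda>n. g (y n)) \<longlonglongrightarrow> 1
            \<longrightarrow> (\<lambda>n. norm (y n - y0)) \<longlonglongrightarrow> 0"
    using assms(2) unfolding strongly_exposed_def by blast
  have ny: "norm y0 \<le> 1" using assms(1) by simp
  have P1: "\<forall>\<epsilon>>0. \<exists>C::('a \<times> 'b) set. is_ccs1 C \<and> 0 \<in> C \<and>
            (\<forall>u\<in>C. \<forall>v\<in>C. norm1 (u - v) \<le> 4 * \<epsilon>)"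
  proof (intro allI impI)
    fix \<epsilon> :: real assume ep: "\<epsilon> > 0"
    obtain d1 where d1: "d1 > 0" and d1p: "\<forall>y. norm y \<le> 1 \<longrightarrow> g y > 1 - d1 \<longrightarrow> norm (y - y0) < \<epsilon>"
      using exposed_unif[OF bl og se ep] by blast
    define d where "d = min d1 \<epsilon>"
    have d: "d > 0" "d \<le> d1" "d \<le> \<epsilon>" using d1 ep by (auto simp: d_def)
    define f1 :: "'a \<times> 'b \<Rightarrow> real" where "f1 = (\<lambda>u. 1 * g (snd u))"
    define f2 :: "'a \<times> 'b \<Rightarrow> real" where "f2 = (\<lambda>u. (-1) * g (snd u))"
    have df1: "dnorm1 f1 = 1" unfolding f1_def by (rule dnorm_g[OF bl og gy ny]) simp
    have df2: "dnorm1 f2 = 1" unfolding f2_def by (rule dnorm_g[OF bl og gy ny]) simp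
    have blg: "bounded_linear (\<lambda>u::'a \<times> 'b. g (snd u))"
      using bounded_linear_compose[OF bl bounded_linear_snd] by (simp add: o_def)
    have bl1: "bounded_linear f1" unfolding f1_def using blg by simp
    have bl2: "bounded_linear f2" unfolding f2_def using bounded_linear_minus[OF blg] by simp
    define S where "S = (\<lambda>i::nat. if i = 0 then {u\<in>ball1. f1 u > dnorm1 f1 - d}
                                    else {u\<in>ball1. f2 u > dnorm1 f2 - d})"
    define C :: "('a \<times> 'b) set" where "C = {(\<Sum>i<2. (1/2::real) *\<^sub>R v i) | v. \<forall>i<2. v i \<in> S i}"
    have p0: "(0::'a, y0) \<in> S 0" using d gy ny unfolding S_def df1 by (simp add: f1_def ball1_def norm1_def)
    have gm: "g (- y) = - g y" for y using bl by (simp add: linear_simps)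
    have p1: "(0::'a, -y0) \<in> S 1" using d gy ny gm unfolding S_def df2 by (simp add: f2_def ball1_def norm1_def)
    have ccs: "is_ccs1 C"
      unfolding is_ccs1_def
    proof (intro exI conjI)
      show "(1::nat) \<le> 2" by simp
      show "(\<Sum>i<(2::nat). (1/2::real)) = 1" by simp
      show "C = {(\<Sum>i<2. (1/2::real) *\<^sub>R v i) | v. \<forall>i<2. v i \<in> S i}" by (rule C_def)
      show "\<forall>i<2. 0 < (1/2::real) \<and> (1/2::real) \<le> 1 \<and> is_slice1 (S i)"
      proof (intro allI impI conjI)
        fix i :: nat assume "i < 2"
        then have "i = 0 \<or> i = 1" by auto
        then show "is_slice1 (S i)"
        proof
          assume "i = 0"
          then show ?thesis unfolding is_slice1_def using bl1 d p0
            by (intro exI[of _ f1] exI[of _ d]) (auto simp: S_def)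
        next
          assume "i = 1"
          then show ?thesis unfolding is_slice1_def using bl2 d p1
            by (intro exI[of _ f2] exI[of _ d]) (auto simp: S_def)
        qed
      qed simp_all
    qed
    have m0: "norm (fst u) < d \<and> norm (snd u - y0) < \<epsilon>" if "u \<in> S 0" for u
    proof -
      have u: "norm (fst u) + norm (snd u) \<le> 1" "g (snd u) > 1 - d"
        using that unfolding S_def df1 by (auto simp: ball1_def norm1_def f1_def)
      have "g (snd u) \<le> norm (snd u)" using g_le_norm[OF bl og, of "snd u"] by simp
      moreover have "norm (snd u) \<le> 1" using u(1) by (smt (verit) norm_ge_zero)
      ultimately show ?thesis using u d d1p by force
    qed
    have m1: "norm (fst u) < d \<and> norm (snd u + y0) < \<epsilon>" if "u \<in> S 1" for u
    proof -
      have u: "norm (fst u) + norm (snd u) \<le> 1" "g (- snd u) > 1 - d"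
        using that gm unfolding S_def df2 by (auto simp: ball1_def norm1_def f2_def)
      have "g (- snd u) \<le> norm (snd u)" using g_le_norm[OF bl og, of "- snd u"] by simp
      moreover have "norm (- snd u) \<le> 1" using u(1) by (smt (verit) norm_ge_zero norm_minus_cancel)
      ultimately have "norm (fst u) < d" "norm (- snd u - y0) < \<epsilon>" using u d d1p by force+
      moreover have "- snd u - y0 = - (snd u + y0)" by simp
      ultimately show ?thesis by (metis norm_minus_cancel)
    qed
    have small: "norm1 w \<le> 2 * \<epsilon>" if wC: "w \<in> C" for w
    proof -
      obtain v where v: "w = (\<Sum>i<2. (1/2::real) *\<^sub>R v i)" "\<forall>i<2. v i \<in> S i"
        using wC unfolding C_def by blast
      have w: "w = (1/2) *\<^sub>R v 0 + (1/2) *\<^sub>R v 1" using v(1) by (simp add: numeral_2_eq_2)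
      have a: "norm (fst (v 0)) < d \<and> norm (snd (v 0) - y0) < \<epsilon>" using m0 v(2) by simp
      have b: "norm (fst (v 1)) < d \<and> norm (snd (v 1) + y0) < \<epsilon>" using m1 v(2) by simp
      show ?thesis unfolding w using half_bound[of "v 0" "v 1" y0] a b d by argo
    qed
    have z: "(0::'a \<times> 'b) \<in> C"
    proof -
      let ?v = "\<lambda>i::nat. if i = 0 then (0::'a, y0) else (0, -y0)"
      have "\<forall>i<2. ?v i \<in> S i" using p0 p1 by (auto simp: less_2_cases_iff)
      moreover have "(\<Sum>i<2. (1/2::real) *\<^sub>R ?v i) = 0"
        by (simp add: numeral_2_eq_2 zero_prod_def)
      ultimately show ?thesis unfolding C_def by force
    qed
    have "\<forall>u\<in>C. \<forall>v\<in>C. norm1 (u - v) \<le> 4 * \<epsilon>"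
      using small norm1_diff by (smt (verit))
    then show "\<exists>C::('a \<times> 'b) set. is_ccs1 C \<and> 0 \<in> C \<and> (\<forall>u\<in>C. \<forall>v\<in>C. norm1 (u - v) \<le> 4 * \<epsilon>)"
      using ccs z by blast
  qed
  obtain C :: "('a \<times> 'b) set" where C: "is_ccs1 C" "0 \<in> C" "\<forall>u\<in>C. \<forall>v\<in>C. norm1 (u - v) \<le> 1/2"
    using P1[rule_format, of "1/8"] by auto
  have nC: "norm1 v \<le> 1/2" if "v \<in> C" for v using C(2,3) that by (metis diff_zero)
  have P2: "\<forall>u::'a \<times> 'b. \<not> ccs_daugavet_point1 u"
  proof (intro allI notI)
    fix u :: "'a \<times> 'b" assume "ccs_daugavet_point1 u"
    then have u: "norm1 u = 1" "(SUP v\<in>C. norm1 (u - v)) = 2"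
      using C(1) unfolding ccs_daugavet_point1_def by auto
    have "(SUP v\<in>C. norm1 (u - v)) \<le> 3/2"
    proof (rule cSUP_least)
      show "C \<noteq> {}" using C(2) by blast
      fix v assume "v \<in> C"
      then show "norm1 (u - v) \<le> 3/2" using nC norm1_diff[of u v] u(1) by fastforce
    qed
    then show False using u(2) by simp
  qed
  have P3: "\<not> SD2P1 TYPE('a \<times> 'b)"
  proof
    assume "SD2P1 TYPE('a \<times> 'b)"
    then have "diam1 C = 2" using C(1) unfolding SD2P1_def by blast
    moreover have "diam1 C \<le> 1/2" unfolding diam1_def
    proof (rule cSUP_least)
      show "C \<times> C \<noteq> {}" using C(2) by blast
      fix p assume "p \<in> C \<times> C"
      then have "fst p \<in> C" "snd p \<in> C" by (auto simp: mem_Times_iff)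
      then show "norm1 (fst p - snd p) \<le> 1/2" using C(3) by blast
    qed
    ultimately show False by simp
  qed
  show ?thesis using P1 P2 P3 by blast
qed

end
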